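(* Let $q\in\mathbb{C}^\times$ be not a root of unity, $k\in\mathbb{Z}_{>0}$ and $Q,\beta\in\mathbb{C}^\times$. The polynomials $p^{\langle Q\rangle}_t(q;\beta)(x_1,\dots,x_k)$, $1\le t\le k$, are algebraically independent over $\mathbb{C}$.
   Context: For $t,k>0$, $p_t(q)(x_1,\dots,x_k)=\sum_{\lambda\vdash t,\ \ell(\lambda)\le k}q^{-\ell(\lambda)}(q-q^{-1})^{\ell(\lambda)-1}m_\lambda(x_1,\dots,x_k)$ ($\lambda$ partitions of $t$ with at most $k$ nonzero parts, $m_\lambda$ monomial symmetric polynomial). With $\tilde\beta=(q-q^{-1})^{-1}(1-\beta^{-2})$, $p^{\langle Q\rangle}_t(q;\beta)(x_1,\dots,x_k)=p_t(q)(x_1,\dots,x_k)+\tilde\beta Q^{-t}+(q-q^{-1})\sum_{z=1}^{t-1}\tilde\beta Q^{-t+z}p_z(q)(x_1,\dots,x_k)$. *)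

theory Defs
  imports Complex_Main "HOL-Library.Poly_Mapping"
begin

definition partitions_le :: "nat \<Rightarrow> nat \<Rightarrow> nat list set" where
  "partitions_le t k = {lam. sorted (rev lam) \<and> 0 \<notin> set lam \<and> sum_list lam = t \<and> length lam \<le> k}"

text \<open>Monomial symmetric polynomial m_lam(x_1,...,x_k) as a function of x (only x 1 .. x k are used):
  sum of the distinct monomials x^alpha, alpha in N^k a rearrangement of lam padded with zeros.\<close>
definition monomial_sym :: "nat \<Rightarrow> nat list \<Rightarrow> (nat \<Rightarrow> complex) \<Rightarrow> complex" where
  "monomial_sym k lam x =
     (\<Sum>alpha\<in>{alpha. length alpha = k \<and> rev (sort (filter (\<lambda>a. a \<noteq> 0) alpha)) = lam}.
        \<Prod>i<k. x (Suc i) ^ (alpha ! i))"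

definition p_poly :: "nat \<Rightarrow> complex \<Rightarrow> nat \<Rightarrow> (nat \<Rightarrow> complex) \<Rightarrow> complex" where
  "p_poly t q k x =
     (\<Sum>lam\<in>partitions_le t k.
        q powi (- int (length lam)) * (q - inverse q) ^ (length lam - 1) * monomial_sym k lam x)"

definition beta_tilde :: "complex \<Rightarrow> complex \<Rightarrow> complex" where
  "beta_tilde q \<beta> = inverse (q - inverse q) * (1 - \<beta> powi (-2))"

definition pQ_poly :: "complex \<Rightarrow> nat \<Rightarrow> complex \<Rightarrow> complex \<Rightarrow> nat \<Rightarrow> (nat \<Rightarrow> complex) \<Rightarrow> complex" where
  "pQ_poly Q t q \<beta> k x =
     p_poly t q k x + beta_tilde q \<beta> * Q powi (- int t)
     + (q - inverse q) * (\<Sum>z = 1..<t. beta_tilde q \<beta> * Q powi (int z - int t) * p_poly z q k x)"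

text \<open>Multivariate polynomials over C: finitely supported coefficient maps on monomials
  (a monomial is a finitely supported exponent map on variable indices).\<close>
type_synonym mpoly = "(nat \<Rightarrow>\<^sub>0 nat) \<Rightarrow>\<^sub>0 complex"

definition mpoly_eval :: "mpoly \<Rightarrow> (nat \<Rightarrow> complex) \<Rightarrow> complex" where
  "mpoly_eval F y = sum (\<lambda>m. Poly_Mapping.lookup F m * prod (\<lambda>i. y i ^ Poly_Mapping.lookup m i) (Poly_Mapping.keys m)) (Poly_Mapping.keys F)"

text \<open>Polynomial functions f 1, ..., f n (in the variables x) are algebraically independent over C:
  no nonzero polynomial F in n variables Y_1..Y_n gives F(f_1,...,f_n) = 0.  Over the infinite field C
  a polynomial is zero iff it vanishes as a function, which is how the vanishing is expressed.\<close>
definition alg_indep :: "nat \<Rightarrow> (nat \<Rightarrow> (nat \<Rightarrow> complex) \<Rightarrow> complex) \<Rightarrow> bool" where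
  "alg_indep n f \<longleftrightarrow>
     (\<forall>F::mpoly. F \<noteq> 0 \<and> (\<forall>m\<in>Poly_Mapping.keys F. Poly_Mapping.keys m \<subseteq> {1..n}) \<longrightarrow>
        \<not> (\<forall>x. mpoly_eval F (\<lambda>i. f i x) = 0))"

end

theory Submission
  imports Defs "HOL-Computational_Algebra.Computational_Algebra"
begin

definition cc :: "complex \<Rightarrow> nat \<Rightarrow> complex" where
  "cc d j = (if j = 0 then 1 else d)"

definition Alists :: "nat \<Rightarrow> nat \<Rightarrow> nat list set" where
  "Alists k t = {al. length al = k \<and> sum_list al = t}"

definition SS :: "complex \<Rightarrow> nat \<Rightarrow> nat \<Rightarrow> (nat \<Rightarrow> complex) \<Rightarrow> complex" where
  "SS d k t x = (\<Sum>al\<in>Alists k t. \<Prod>i<k. (cc d (al!i) * x (Suc i) ^ (al!i)))"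

lemma finite_Alists: "finite (Alists k t)"
proof (rule finite_subset)
  show "Alists k t \<subseteq> {xs. set xs \<subseteq> {..t} \<and> length xs = k}"
    unfolding Alists_def using member_le_sum_list by fastforce
  show "finite {xs. set xs \<subseteq> {..t} \<and> length xs = k}"
    by (rule finite_lists_length_eq) simp
qed

lemma finite_partitions_le: "finite (partitions_le t k)"
proof (rule finite_subset)
  show "partitions_le t k \<subseteq> {xs. set xs \<subseteq> {..t} \<and> length xs \<le> k}"
    unfolding partitions_le_def using member_le_sum_list by fastforce
  show "finite {xs. set xs \<subseteq> {..t} \<and> length xs \<le> k}"
    by (rule finite_lists_length_le) simp
qed

lemma sum_list_filter_nz: "sum_list (filter (\<lambda>a. a \<noteq> 0) xs) = sum_list (xs::nat list)"
  by (induction xs) auto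

lemma sum_list_sort_nat: "sum_list (sort (xs::nat list)) = sum_list xs"
  by (metis mset_sort sum_mset_sum_list)

definition fpart :: "nat list \<Rightarrow> nat list" where
  "fpart al = rev (sort (filter (\<lambda>a. a \<noteq> 0) al))"

lemma sum_fpart: "sum_list (fpart al) = sum_list al"
  by (simp only: fpart_def sum_list.rev sum_list_sort_nat sum_list_filter_nz)

lemma length_fpart: "length (fpart al) = length (filter (\<lambda>a. a \<noteq> 0) al)"
  unfolding fpart_def by simp

lemma fpart_in: "al \<in> Alists k t \<Longrightarrow> fpart al \<in> partitions_le t k"
  unfolding partitions_le_def Alists_def
  using sum_fpart[of al] length_fpart[of al] length_filter_le[of "\<lambda>a. a \<noteq> 0" al]
  by (auto simp: fpart_def)

lemma prod_cc: "(\<Prod>i<length al. cc d (al!i)) = d ^ length (filter (\<lambda>a. a \<noteq> 0) al)"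
proof (induction al)
  case Nil then show ?case by simp
next
  case (Cons a al)
  have "(\<Prod>i<length (a # al). cc d ((a # al)!i)) = cc d a * (\<Prod>i<length al. cc d (al!i))"
    by (simp del: prod.lessThan_Suc add: prod.lessThan_Suc_shift)
  then show ?case using Cons by (simp add: cc_def)
qed

lemma coef_id:
  fixes q :: complex
  assumes "q \<noteq> 0" "l \<ge> 1"
  shows "(q - inverse q) * (q powi (- int l) * (q - inverse q) ^ (l - 1)) = ((q - inverse q) * inverse q) ^ l"
proof -
  have h: "q powi (- int l) = inverse q ^ l"
    using power_int_minus[of q "int l"] by (simp add: power_inverse)
  obtain m where l: "l = Suc m" using assms by (cases l) auto
  show ?thesis unfolding h unfolding l using assms
    by (simp add: power_mult_distrib)
qed

lemma p_poly_SS: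
  assumes "q \<noteq> 0" "t \<ge> 1"
  shows "(q - inverse q) * p_poly t q k x = SS ((q - inverse q) * inverse q) k t x"
proof -
  define g where "g l = q powi (- int l) * (q - inverse q) ^ (l - 1)" for l :: nat
  define X where "X al = (\<Prod>i<k. x (Suc i) ^ (al!i))" for al
  have "p_poly t q k x = (\<Sum>lam\<in>partitions_le t k. \<Sum>al\<in>{al \<in> Alists k t. fpart al = lam}.
           g (length (filter (\<lambda>a. a \<noteq> 0) al)) * X al)"
    unfolding p_poly_def monomial_sym_def sum_distrib_left
  proof (rule sum.cong[OF refl])
    fix lam assume lam: "lam \<in> partitions_le t k"
    have eqs: "{alpha. length alpha = k \<and> rev (sort (filter (\<lambda>a. a \<noteq> 0) alpha)) = lam} =
      {al \<in> Alists k t. fpart al = lam}"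
      using lam sum_fpart unfolding Alists_def partitions_le_def fpart_def by auto
    show "(\<Sum>alpha\<in>{alpha. length alpha = k \<and> rev (sort (filter (\<lambda>a. a \<noteq> 0) alpha)) = lam}.
           q powi - int (length lam) * (q - inverse q) ^ (length lam - 1) * (\<Prod>i<k. x (Suc i) ^ (alpha ! i))) =
         (\<Sum>al\<in>{al \<in> Alists k t. fpart al = lam}. g (length (filter (\<lambda>a. a \<noteq> 0) al)) * X al)"
      unfolding eqs
      by (rule sum.cong[OF refl]) (auto simp: g_def X_def length_fpart)
  qed
  also have "\<dots> = (\<Sum>al\<in>Alists k t. g (length (filter (\<lambda>a. a \<noteq> 0) al)) * X al)"
    by (rule sum.group[OF finite_Alists finite_partitions_le]) (auto intro: fpart_in)
  finally have P: "p_poly t q k x = (\<Sum>al\<in>Alists k t. g (length (filter (\<lambda>a. a \<noteq> 0) al)) * X al)" .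
  show ?thesis
    unfolding P SS_def sum_distrib_left
  proof (rule sum.cong[OF refl])
    fix al assume al: "al \<in> Alists k t"
    then have len: "length al = k" and s: "sum_list al = t" by (auto simp: Alists_def)
    have nz: "length (filter (\<lambda>a. a \<noteq> 0) al) \<ge> 1"
    proof (rule ccontr)
      assume "\<not> ?thesis"
      then have "filter (\<lambda>a. a \<noteq> 0) al = []" by (cases "filter (\<lambda>a. a \<noteq> 0) al") auto
      then have "sum_list al = 0" using sum_list_filter_nz[of al] by simp
      then show False using s assms by simp
    qed
    have "(\<Prod>i<k. cc ((q - inverse q) * inverse q) (al ! i) * x (Suc i) ^ (al ! i)) =
       (\<Prod>i<k. cc ((q - inverse q) * inverse q) (al ! i)) * X al"
      by (simp add: prod.distrib X_def)
    also have "\<dots> = ((q - inverse q) * inverse q) ^ length (filter (\<lambda>a. a \<noteq> 0) al) * X al"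
      using prod_cc[of "(q - inverse q) * inverse q" al] len by simp
    finally show "(q - inverse q) * (g (length (filter (\<lambda>a. a \<noteq> 0) al)) * X al) =
       (\<Prod>i<k. cc ((q - inverse q) * inverse q) (al ! i) * x (Suc i) ^ (al ! i))"
      using coef_id[OF assms(1) nz] unfolding g_def by (simp add: mult.assoc)
  qed
qed


lemma Alists_0: "Alists 0 t = (if t = 0 then {[]} else {})"
  unfolding Alists_def by auto

lemma SS_0: "SS d 0 t x = (if t = 0 then 1 else 0)"
  unfolding SS_def Alists_0 by simp

lemma SS_Suc:
  "SS d (Suc k) t x = (\<Sum>n=0..t. SS d k n x * (cc d (t-n) * x (Suc k) ^ (t-n)))"
proof -
  define F where "F i j = cc d j * x (Suc i) ^ j" for i j
  have "(\<Sum>n=0..t. SS d k n x * (cc d (t-n) * x (Suc k) ^ (t-n))) =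
        (\<Sum>n=0..t. \<Sum>al\<in>Alists k n. (\<Prod>i<k. F i (al!i)) * F k (t-n))"
    unfolding SS_def F_def sum_distrib_right by simp
  also have "\<dots> = (\<Sum>(n,al)\<in>(SIGMA n:{0..t}. Alists k n). (\<Prod>i<k. F i (al!i)) * F k (t-n))"
    by (rule sum.Sigma) (auto simp: finite_Alists)
  also have "\<dots> = (\<Sum>be\<in>Alists (Suc k) t. \<Prod>i<Suc k. F i (be!i))"
  proof (rule sum.reindex_bij_witness[where j = "\<lambda>(n,al). al @ [t-n]" and i = "\<lambda>be. (t - last be, butlast be)"])
    fix a assume a: "a \<in> (SIGMA n:{0..t}. Alists k n)"
    obtain n al where na: "a = (n, al)" by (cases a)
    with a have n: "n \<le> t" and al: "length al = k" "sum_list al = n" by (auto simp: Alists_def)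
    show "(case case a of (n, al) \<Rightarrow> al @ [t - n] of be \<Rightarrow> (t - last be, butlast be)) = a"
      using na n by simp
    show "(case a of (n, al) \<Rightarrow> al @ [t - n]) \<in> Alists (Suc k) t"
      using na n al by (simp add: Alists_def)
    show "(\<Prod>i<Suc k. F i ((case a of (n, al) \<Rightarrow> al @ [t - n]) ! i)) =
      (case a of (n, al) \<Rightarrow> (\<Prod>i<k. F i (al ! i)) * F k (t - n))"
      using na al by (simp add: nth_append)
  next
    fix b assume b: "b \<in> Alists (Suc k) t"
    then have lb: "length b = Suc k" and sb: "sum_list b = t" by (auto simp: Alists_def)
    then have bne: "b \<noteq> []" by auto
    have bb: "b = butlast b @ [last b]" using bne by simp
    have ss: "sum_list b = sum_list (butlast b) + last b"
      by (subst bb) simp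
    have lt: "last b \<le> t" using ss sb by simp
    show "(case (t - last b, butlast b) of (n, al) \<Rightarrow> al @ [t - n]) = b"
      using lt bb by simp
    show "(t - last b, butlast b) \<in> (SIGMA n:{0..t}. Alists k n)"
      using lb ss sb by (simp add: Alists_def)
  qed
  finally show ?thesis unfolding SS_def F_def by simp
qed

definition Rf :: "complex \<Rightarrow> nat \<Rightarrow> (nat \<Rightarrow> complex) \<Rightarrow> complex fps" where
  "Rf d k x = Abs_fps (\<lambda>t. SS d k t x)"

definition Cf :: "complex \<Rightarrow> complex \<Rightarrow> complex fps" where
  "Cf d y = Abs_fps (\<lambda>j. cc d j * y ^ j)"

lemma Rf_0: "Rf d 0 x = 1"
  by (rule fps_ext) (simp add: Rf_def SS_0)

lemma Rf_Suc: "Rf d (Suc k) x = Rf d k x * Cf d (x (Suc k))"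
  by (rule fps_ext) (simp add: Rf_def Cf_def SS_Suc fps_mult_nth)

lemma lin_mult_nth:
  fixes c :: complex and P :: "complex fps"
  shows "((1 - fps_const c * fps_X) * P) $ n = P $ n - (if n = 0 then 0 else c * P $ (n - 1))"
proof -
  have "(1 - fps_const c * fps_X) * P = P - fps_X * (fps_const c * P)"
    by (simp add: algebra_simps)
  then show ?thesis by simp
qed

lemma Cf_lin: "(1 - fps_const y * fps_X) * Cf d y = 1 - fps_const ((1 - d) * y) * fps_X"
proof (rule fps_ext)
  fix n
  show "((1 - fps_const y * fps_X) * Cf d y) $ n = (1 - fps_const ((1 - d) * y) * fps_X) $ n"
    unfolding lin_mult_nth
    by (cases n; cases "n - 1") (auto simp: Cf_def cc_def fps_X_def algebra_simps)
qed

lemma Rf_identity: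
  "(\<Prod>i<k. (1 - fps_const (x (Suc i)) * fps_X)) * Rf d k x =
   (\<Prod>i<k. (1 - fps_const ((1 - d) * x (Suc i)) * fps_X))"
proof (induction k)
  case 0 then show ?case by (simp add: Rf_0)
next
  case (Suc k)
  have "(\<Prod>i<Suc k. (1 - fps_const (x (Suc i)) * fps_X)) * Rf d (Suc k) x =
     ((\<Prod>i<k. (1 - fps_const (x (Suc i)) * fps_X)) * Rf d k x) *
     ((1 - fps_const (x (Suc k)) * fps_X) * Cf d (x (Suc k)))"
    by (simp add: Rf_Suc mult_ac)
  then show ?case using Suc by (simp add: Cf_lin)
qed

lemma scaled_prod_nth:
  fixes a :: complex and z :: "nat \<Rightarrow> complex"
  assumes "finite I"
  shows "(\<Prod>i\<in>I. (1 - fps_const (a * z i) * fps_X)) $ n = a ^ n * (\<Prod>i\<in>I. (1 - fps_const (z i) * fps_X)) $ n"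
  using assms
proof (induction I arbitrary: n rule: finite_induct)
  case empty then show ?case by (cases n) auto
next
  case (insert j I)
  show ?case
    using insert by (simp add: lin_mult_nth) (cases n; simp add: algebra_simps)
qed

fun ee :: "(nat \<Rightarrow> complex) \<Rightarrow> complex \<Rightarrow> nat \<Rightarrow> complex" where
  "ee r a 0 = 1"
| "ee r a (Suc n) = - (\<Sum>i = 1..Suc n. r i * ee r a (Suc n - i)) / (1 - a ^ Suc n)"

declare ee.simps(2)[simp del]

lemma sum_split_last: "(\<Sum>i=0..(t::nat). f i) = (\<Sum>i<t. f i) + (f t :: complex)"
proof -
  have "{0..t} = insert t {..<t}" by auto
  then show ?thesis by (simp add: add.commute)
qed

lemma ee_eq:
  assumes "\<forall>n\<ge>1. a ^ n \<noteq> 1" "r 0 = 1"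
  shows "(\<Sum>i=0..n. r i * ee r a (n - i)) = a ^ n * ee r a n"
proof (cases n)
  case 0 then show ?thesis using assms by simp
next
  case (Suc m)
  have ne: "1 - a ^ Suc m \<noteq> 0" using assms by auto
  define S where "S = (\<Sum>i=1..Suc m. r i * ee r a (Suc m - i))"
  have hS: "ee r a (Suc m) = - S / (1 - a ^ Suc m)" unfolding S_def by (rule ee.simps(2))
  then have hS': "S = - (1 - a ^ Suc m) * ee r a (Suc m)" using ne by (simp add: field_simps)
  have "(\<Sum>i=0..Suc m. r i * ee r a (Suc m - i)) = r 0 * ee r a (Suc m) + S"
    unfolding S_def by (subst sum.atLeast_Suc_atMost) simp_all
  then show ?thesis using Suc assms hS' by (simp add: algebra_simps)
qed

lemma prod_list_map_nth: "prod_list (map f xs) = (\<Prod>i<length xs. f (xs ! i))"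
  by (induction xs) (simp_all del: prod.lessThan_Suc add: prod.lessThan_Suc_shift)

lemma reflect_lin: "reflect_poly [:-z, 1:] = [:1, -(z::complex):]"
  by (simp add: reflect_poly_def)

lemma fps_lin: "fps_of_poly [:1, -(z::complex):] = 1 - fps_const z * fps_X"
proof (rule fps_ext)
  fix n
  show "fps_of_poly [:1, - z:] $ n = (1 - fps_const z * fps_X) $ n"
    by (cases n) (auto simp: coeff_pCons fps_X_nth split: nat.split)
qed

lemma SS_surj:
  fixes a :: complex and r :: "nat \<Rightarrow> complex"
  assumes a: "\<forall>n\<ge>1. a ^ n \<noteq> 1" and r0: "r 0 = 1"
  shows "\<exists>x. \<forall>t\<le>k. SS (1 - a) k t x = r t"
proof -
  define e where "e = ee r a"
  have e0: "e 0 = 1" by (simp add: e_def)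
  have eq: "(\<Sum>i=0..n. r i * e (n - i)) = a ^ n * e n" for n
    unfolding e_def using a r0 by (rule ee_eq)
  define P :: "complex poly" where "P = (\<Sum>j\<le>k. monom (e j) (k - j))"
  have cP: "coeff P n = (if n \<le> k then e (k - n) else 0)" for n
  proof -
    have "coeff P n = (\<Sum>j\<le>k. if k - j = n then e j else 0)"
      unfolding P_def coeff_sum coeff_monom by (rule sum.cong) auto
    also have "\<dots> = (\<Sum>j\<le>k. if j = k - n \<and> n \<le> k then e j else 0)"
      by (rule sum.cong) auto
    also have "\<dots> = (if n \<le> k then e (k - n) else 0)"
      by (cases "n \<le> k") (simp_all add: sum.delta')
    finally show ?thesis .
  qed
  have degP: "degree P = k"
  proof (rule antisym)
    show "degree P \<le> k" by (rule degree_le) (simp add: cP)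
    show "k \<le> degree P" by (rule le_degree) (simp add: cP e0)
  qed
  have lcP: "lead_coeff P = 1" using degP cP e0 by simp
  have P0: "P \<noteq> 0" using lcP by auto
  obtain A where A: "size A = degree P" "P = smult (lead_coeff P) (\<Prod>z\<in>#A. [:-z, 1:])"
    using alg_closed_imp_factorization[OF P0] by blast
  obtain zs where zs: "mset zs = A" using ex_mset by blast
  have lzs: "length zs = k" using A(1) zs degP by (metis size_mset)
  have Pzs: "P = prod_list (map (\<lambda>z. [:-z, 1:]) zs)"
    using A(2) lcP zs by (simp add: prod_mset_prod_list[symmetric])
  define x where "x i = zs ! (i - 1)" for i
  have Erefl: "fps_of_poly (reflect_poly P) = (\<Prod>i<k. (1 - fps_const (x (Suc i)) * fps_X))"
    unfolding Pzs reflect_poly_prod_list fps_of_poly_prod_list map_map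
    by (simp add: o_def reflect_lin fps_lin prod_list_map_nth lzs x_def)
  have En: "fps_of_poly (reflect_poly P) $ n = e n" if "n \<le> k" for n
    using that by (simp add: coeff_reflect_poly degP cP)
  define E where "E = (\<Prod>i<k. (1 - fps_const (x (Suc i)) * fps_X))"
  have Enk: "E $ n = e n" if "n \<le> k" for n using En[OF that] Erefl E_def by simp
  have idn: "(Rf (1 - a) k x * E) $ t = a ^ t * E $ t" for t
  proof -
    have h1: "E * Rf (1 - a) k x = (\<Prod>i<k. (1 - fps_const ((1 - (1 - a)) * x (Suc i)) * fps_X))"
      unfolding E_def by (rule Rf_identity)
    have "Rf (1 - a) k x * E = E * Rf (1 - a) k x" by (rule mult.commute)
    also have "\<dots> = (\<Prod>i<k. (1 - fps_const (a * x (Suc i)) * fps_X))"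
      unfolding h1 by simp
    finally have "Rf (1 - a) k x * E = (\<Prod>i<k. (1 - fps_const (a * x (Suc i)) * fps_X))" .
    then show ?thesis unfolding E_def by (simp add: scaled_prod_nth)
  qed
  have main: "SS (1 - a) k t x = r t" if "t \<le> k" for t
    using that
  proof (induction t rule: less_induct)
    case (less t)
    have "(\<Sum>i=0..t. SS (1 - a) k i x * e (t - i)) = a ^ t * e t"
      using idn[of t] less.prems by (simp add: fps_mult_nth Rf_def Enk)
    also have "\<dots> = (\<Sum>i=0..t. r i * e (t - i))" using eq by simp
    finally have X: "(\<Sum>i=0..t. SS (1 - a) k i x * e (t - i)) = (\<Sum>i=0..t. r i * e (t - i))" .
    have "(\<Sum>i<t. SS (1 - a) k i x * e (t - i)) = (\<Sum>i<t. r i * e (t - i))"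
      by (rule sum.cong[OF refl]) (use less in auto)
    then show ?case using X unfolding sum_split_last by (simp add: e0)
  qed
  show ?thesis using main by blast
qed

lemma digits_inj:
  fixes f g :: "nat \<Rightarrow> nat" and D :: nat
  shows "(\<forall>i<n. f i < D) \<Longrightarrow> (\<forall>i<n. g i < D) \<Longrightarrow>
    (\<Sum>i<n. f i * D^i) = (\<Sum>i<n. g i * D^i) \<Longrightarrow> i < n \<Longrightarrow> f i = g i"
proof (induction n arbitrary: f g i)
  case 0 then show ?case by simp
next
  case (Suc n)
  have ef: "(\<Sum>i<Suc n. f i * D^i) = f 0 + D * (\<Sum>i<n. f (Suc i) * D^i)"
    unfolding sum.lessThan_Suc_shift by (simp add: sum_distrib_left mult_ac)
  have eg: "(\<Sum>i<Suc n. g i * D^i) = g 0 + D * (\<Sum>i<n. g (Suc i) * D^i)"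
    unfolding sum.lessThan_Suc_shift by (simp add: sum_distrib_left mult_ac)
  have f0: "f 0 < D" "g 0 < D" using Suc.prems by auto
  have E: "f 0 + D * (\<Sum>i<n. f (Suc i) * D^i) = g 0 + D * (\<Sum>i<n. g (Suc i) * D^i)"
    using Suc.prems(3) ef eg by simp
  have h0: "f 0 = g 0"
    using arg_cong[OF E, of "\<lambda>z. z mod D"] f0 by simp
  have h1: "(\<Sum>i<n. f (Suc i) * D^i) = (\<Sum>i<n. g (Suc i) * D^i)"
    using arg_cong[OF E, of "\<lambda>z. z div D"] f0 by simp
  show ?case
  proof (cases i)
    case 0 then show ?thesis using h0 by simp
  next
    case (Suc j)
    have "f (Suc j) = g (Suc j)"
      using Suc.IH[of "\<lambda>i. f (Suc i)" "\<lambda>i. g (Suc i)" j] Suc.prems h1 Suc by auto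
    then show ?thesis using Suc by simp
  qed
qed

definition enc :: "nat \<Rightarrow> (nat \<Rightarrow>\<^sub>0 nat) \<Rightarrow> nat" where
  "enc D m = (\<Sum>i\<in>Poly_Mapping.keys m. Poly_Mapping.lookup m i * D^i)"

lemma enc_lessThan:
  assumes "Poly_Mapping.keys m \<subseteq> {..<N}"
  shows "enc D m = (\<Sum>i<N. Poly_Mapping.lookup m i * D^i)"
  unfolding enc_def
  by (rule sum.mono_neutral_left) (use assms in \<open>auto simp: in_keys_iff\<close>)

lemma enc_inj:
  assumes "Poly_Mapping.keys m \<subseteq> {..<N}" "Poly_Mapping.keys m' \<subseteq> {..<N}"
    and "\<forall>i. Poly_Mapping.lookup m i < D" "\<forall>i. Poly_Mapping.lookup m' i < D"
    and "enc D m = enc D m'"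
  shows "m = m'"
proof (rule poly_mapping_eqI)
  fix i
  show "Poly_Mapping.lookup m i = Poly_Mapping.lookup m' i"
  proof (cases "i < N")
    case True
    then show ?thesis
      using digits_inj[of N "Poly_Mapping.lookup m" D "Poly_Mapping.lookup m'" i] assms
        enc_lessThan[OF assms(1)] enc_lessThan[OF assms(2)] by auto
  next
    case False
    then have "i \<notin> Poly_Mapping.keys m" "i \<notin> Poly_Mapping.keys m'" using assms by auto
    then show ?thesis by (simp add: in_keys_iff)
  qed
qed

lemma mpoly_nonzero_exists:
  fixes F :: mpoly
  assumes "F \<noteq> 0"
  shows "\<exists>y. mpoly_eval F y \<noteq> 0"
proof -
  have fK: "finite (\<Union>m\<in>Poly_Mapping.keys F. Poly_Mapping.keys m)" by auto
  then obtain N where N: "(\<Union>m\<in>Poly_Mapping.keys F. Poly_Mapping.keys m) \<subseteq> {..<N}"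
    using finite_nat_bounded by blast
  have fV: "finite (insert 0 ((\<lambda>(m,i). Poly_Mapping.lookup m i) ` (SIGMA m:Poly_Mapping.keys F. Poly_Mapping.keys m)))"
    by auto
  then obtain D where D: "insert 0 ((\<lambda>(m,i). Poly_Mapping.lookup m i) ` (SIGMA m:Poly_Mapping.keys F. Poly_Mapping.keys m)) \<subseteq> {..<D}"
    using finite_nat_bounded by blast
  have Dm: "\<forall>i. Poly_Mapping.lookup m i < D" if "m \<in> Poly_Mapping.keys F" for m
  proof
    fix i show "Poly_Mapping.lookup m i < D"
    proof (cases "i \<in> Poly_Mapping.keys m")
      case True then show ?thesis using D that by force
    next
      case False then show ?thesis using D by (auto simp: in_keys_iff)
    qed
  qed
  have Nm: "Poly_Mapping.keys m \<subseteq> {..<N}" if "m \<in> Poly_Mapping.keys F" for m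
    using N that by auto
  define P :: "complex poly" where
    "P = (\<Sum>m\<in>Poly_Mapping.keys F. monom (Poly_Mapping.lookup F m) (enc D m))"
  obtain m0 where m0: "m0 \<in> Poly_Mapping.keys F" using assms by (metis keys_eq_empty ex_in_conv)
  have "coeff P (enc D m0) = (\<Sum>m\<in>Poly_Mapping.keys F. if m = m0 then Poly_Mapping.lookup F m else 0)"
    unfolding P_def coeff_sum coeff_monom
  proof (rule sum.cong[OF refl])
    fix m assume "m \<in> Poly_Mapping.keys F"
    then show "(if enc D m = enc D m0 then Poly_Mapping.lookup F m else 0) =
       (if m = m0 then Poly_Mapping.lookup F m else 0)"
      using enc_inj[OF Nm Nm[OF m0] Dm Dm[OF m0], of m] by auto
  qed
  also have "\<dots> = Poly_Mapping.lookup F m0" using m0 by simp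
  finally have "coeff P (enc D m0) \<noteq> 0" using m0 by (simp add: in_keys_iff)
  then have "P \<noteq> 0" by auto
  then obtain s where s: "poly P s \<noteq> 0" using poly_all_0_iff_0 by blast
  have "mpoly_eval F (\<lambda>i. s ^ (D ^ i)) = poly P s"
    unfolding mpoly_eval_def P_def poly_sum poly_monom enc_def
    by (simp add: power_mult[symmetric] power_sum mult.commute)
  then show ?thesis using s by metis
qed

lemma mpoly_eval_cong:
  assumes "\<forall>m\<in>Poly_Mapping.keys F. Poly_Mapping.keys m \<subseteq> A" "\<forall>i\<in>A. y i = y' i"
  shows "mpoly_eval F y = mpoly_eval F y'"
  unfolding mpoly_eval_def
proof (rule sum.cong[OF refl])
  fix m assume m: "m \<in> Poly_Mapping.keys F"
  have "(\<Prod>i\<in>Poly_Mapping.keys m. y i ^ Poly_Mapping.lookup m i) = (\<Prod>i\<in>Poly_Mapping.keys m. y' i ^ Poly_Mapping.lookup m i)"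
    using assms m by (intro prod.cong[OF refl]) (metis subsetD)
  then show "Poly_Mapping.lookup F m * (\<Prod>i\<in>Poly_Mapping.keys m. y i ^ Poly_Mapping.lookup m i) =
    Poly_Mapping.lookup F m * (\<Prod>i\<in>Poly_Mapping.keys m. y' i ^ Poly_Mapping.lookup m i)" by simp
qed


lemma p_surj:
  fixes q :: complex
  assumes q0: "q \<noteq> 0" and qn: "\<forall>n>0. q ^ n \<noteq> 1"
  shows "\<exists>x. \<forall>t\<in>{1..k}. p_poly t q k x = w t"
proof -
  define c where "c = q - inverse q"
  define a where "a = inverse q ^ 2"
  have c0: "c \<noteq> 0"
  proof
    assume "c = 0"
    then have "q * q = 1" using q0 unfolding c_def by (simp add: field_simps)
    then have "q ^ 2 = 1" by (simp add: power2_eq_square)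
    then show False using qn by auto
  qed
  have an: "\<forall>n\<ge>1. a ^ n \<noteq> 1"
  proof (intro allI impI)
    fix n :: nat assume n: "n \<ge> 1"
    have "a ^ n = inverse (q ^ (2 * n))" unfolding a_def by (simp add: power_mult power_inverse)
    moreover have "q ^ (2 * n) \<noteq> 1" using qn n by auto
    ultimately show "a ^ n \<noteq> 1" by (metis inverse_1 inverse_inverse_eq)
  qed
  have d: "(q - inverse q) * inverse q = 1 - a"
    unfolding a_def using q0 by (simp add: field_simps power2_eq_square)
  define r where "r t = (if t = 0 then 1 else c * w t)" for t
  obtain x where x: "\<forall>t\<le>k. SS (1 - a) k t x = r t"
    using SS_surj[OF an, of r k] by (auto simp: r_def)
  have "p_poly t q k x = w t" if t: "t \<in> {1..k}" for t
  proof -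
    have "c * p_poly t q k x = SS (1 - a) k t x"
      using p_poly_SS[OF q0, of t k x] t d unfolding c_def by simp
    also have "\<dots> = c * w t" using x t by (simp add: r_def)
    finally show ?thesis using c0 by simp
  qed
  then show ?thesis by blast
qed

function tri :: "(nat \<Rightarrow> complex) \<Rightarrow> (nat \<Rightarrow> nat \<Rightarrow> complex) \<Rightarrow> nat \<Rightarrow> complex" where
  "tri w M t = w t - (\<Sum>z\<in>{1..<t}. M t z * tri w M z)"
  by auto
termination
  by (relation "measure (\<lambda>(w, M, t). t)") auto

declare tri.simps[simp del]

lemma pQ_surj:
  fixes q :: complex
  assumes q0: "q \<noteq> 0" and qn: "\<forall>n>0. q ^ n \<noteq> 1"
  shows "\<exists>x. \<forall>t\<in>{1..k}. pQ_poly Q t q \<beta> k x = w t"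
proof -
  define b where "b = beta_tilde q \<beta>"
  define w' where "w' t = w t - b * Q powi (- int t)" for t
  define M where "M t z = (q - inverse q) * (b * Q powi (int z - int t))" for t z
  define v where "v = tri w' M"
  obtain x where x: "\<forall>t\<in>{1..k}. p_poly t q k x = v t"
    using p_surj[OF q0 qn] by blast
  have "pQ_poly Q t q \<beta> k x = w t" if t: "t \<in> {1..k}" for t
  proof -
    have s: "(\<Sum>z = 1..<t. b * Q powi (int z - int t) * p_poly z q k x) =
             (\<Sum>z = 1..<t. b * Q powi (int z - int t) * v z)"
      by (rule sum.cong[OF refl]) (use x t in auto)
    have vt: "v t = w' t - (\<Sum>z\<in>{1..<t}. M t z * v z)"
      unfolding v_def by (rule tri.simps)
    have "pQ_poly Q t q \<beta> k x = v t + b * Q powi (- int t) + (q - inverse q) * (\<Sum>z = 1..<t. b * Q powi (int z - int t) * v z)"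
      unfolding pQ_poly_def b_def[symmetric] s using x t by simp
    also have "(q - inverse q) * (\<Sum>z = 1..<t. b * Q powi (int z - int t) * v z) = (\<Sum>z\<in>{1..<t}. M t z * v z)"
      unfolding M_def sum_distrib_left by (simp add: mult.assoc)
    finally show ?thesis using vt unfolding w'_def by simp
  qed
  then show ?thesis by blast
qed

theorem mainTheorem19:
  fixes q Q \<beta> :: complex and k :: nat
  assumes "q \<noteq> 0" and "\<forall>n>0. q ^ n \<noteq> 1"
    and "k > 0" and "Q \<noteq> 0" and "\<beta> \<noteq> 0"
  shows "alg_indep k (\<lambda>t. pQ_poly Q t q \<beta> k)"
  unfolding alg_indep_def
proof (intro allI impI notI)
  fix F :: mpoly
  assume F: "F \<noteq> 0 \<and> (\<forall>m\<in>Poly_Mapping.keys F. Poly_Mapping.keys m \<subseteq> {1..k})"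
  assume Z: "\<forall>x. mpoly_eval F (\<lambda>i. pQ_poly Q i q \<beta> k x) = 0"
  obtain y where y: "mpoly_eval F y \<noteq> 0" using mpoly_nonzero_exists F by blast
  obtain x where x: "\<forall>t\<in>{1..k}. pQ_poly Q t q \<beta> k x = y t"
    using pQ_surj[OF assms(1,2)] by blast
  have "mpoly_eval F (\<lambda>i. pQ_poly Q i q \<beta> k x) = mpoly_eval F y"
    by (rule mpoly_eval_cong[where A="{1..k}"]) (use F x in auto)
  then show False using y Z by simp
qed

end
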